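(* Let $n>k\ge 0$ be integers. There is a bijection between the set $\mathcal{C}_{n-1,k}$ of Pons--Batle words and the set of Young tableaux with walls and holes of type $(k,0,n-1)$. In particular, $|\mathcal{C}_{n-1,k}|=y_{k,0,n-1}$.
   Context: Pons--Batle words: for integers $N\ge k\ge 0$, $\mathcal{C}_{N,k}$ is the set of words over the alphabet $\{\omega_1,\dots,\omega_N\}$ in which each of $\omega_1,\dots,\omega_k$ occurs exactly three times and each of $\omega_{k+1},\dots,\omega_N$ occurs exactly twice, such that in every prefix of the word and for every $i$, either $\omega_i$ does not occur in the prefix, or the number of occurrences of $\omega_i$ in the prefix is at least the number of occurrences of $\omega_j$ in the prefix for every $j>i$. Young tableaux with walls and holes: for integers $k,\ell_1,\ell_2\ge 0$ with $N:=\ell_1+\ell_2\ge k$, a Young tableau with walls and holes of type $(k,\ell_1,\ell_2)$ consists of a subset $S\subseteq\{1,\dots,N\}$ with $|S|=\ell_2$ and a bijective filling of the cells of the following three-row shape with the integers $1,\dots,k+\ell_1+2\ell_2$: the top row has cells in columns $1,\dots,k$, the middle row has cells in columns $1,\dots,N$, and the bottom row has cells exactly in the columns of $S$. The filling must increase from left to right along the top row and along the middle row, and increase from bottom to top within every column; no condition is imposed among the entries of the bottom row (adjacent bottom cells are separated by "walls"). $y_{k,\ell_1,\ell_2}$ denotes the number of such tableaux (pairs $(S,\text{filling})$). For type $(k,0,n-1)$ the bottom row necessarily occupies all columns $1,\dots,n-1$. *)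

theory Defs
  imports Main
begin

(* Letters omega_1 .. omega_N are encoded as the natural numbers 1 .. N. *)

definition pb_words :: "nat \<Rightarrow> nat \<Rightarrow> nat list set" where
  "pb_words N k = {w. set w \<subseteq> {1..N}
      \<and> (\<forall>i\<in>{1..k}. count_list w i = 3)
      \<and> (\<forall>i\<in>{k<..N}. count_list w i = 2)
      \<and> (\<forall>m\<le>length w. \<forall>i\<in>{1..N}.
            count_list (take m w) i = 0 \<or>
            (\<forall>j\<in>{1..N}. i < j \<longrightarrow> count_list (take m w) j \<le> count_list (take m w) i))}"

(* Cells are pairs (row, column); row 1 = top, row 2 = middle, row 3 = bottom. *)
definition ytwh_cells :: "nat \<Rightarrow> nat \<Rightarrow> nat set \<Rightarrow> (nat \<times> nat) set" where
  "ytwh_cells k N S = {(1, c) | c. c \<in> {1..k}} \<union> {(2, c) | c. c \<in> {1..N}} \<union> {(3, c) | c. c \<in> S}"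

definition ytwh :: "nat \<Rightarrow> nat \<Rightarrow> nat \<Rightarrow> (nat set \<times> (nat \<times> nat \<Rightarrow> nat)) set" where
  "ytwh k l1 l2 = {(S, f). let N = l1 + l2 in
      S \<subseteq> {1..N} \<and> card S = l2
      \<and> bij_betw f (ytwh_cells k N S) {1..k + l1 + 2 * l2}
      \<and> (\<forall>x. x \<notin> ytwh_cells k N S \<longrightarrow> f x = 0)
      \<and> (\<forall>c. 1 \<le> c \<and> c < k \<longrightarrow> f (1, c) < f (1, Suc c))
      \<and> (\<forall>c. 1 \<le> c \<and> c < N \<longrightarrow> f (2, c) < f (2, Suc c))
      \<and> (\<forall>c\<in>{1..k}. c \<le> N \<longrightarrow> f (2, c) < f (1, c))
      \<and> (\<forall>c\<in>S. f (3, c) < f (2, c))}"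

definition y_count :: "nat \<Rightarrow> nat \<Rightarrow> nat \<Rightarrow> nat" where
  "y_count k l1 l2 = card (ytwh k l1 l2)"

end

theory Submission
  imports Defs
begin

lemma cnt_mono: "a \<le> b \<Longrightarrow> count_list (take a w) c \<le> count_list (take b w) c"
proof -
  assume "a \<le> b"
  then have "take b w = take a w @ take (b - a) (drop a w)"
    using take_add[of a "b-a" w] by simp
  then show ?thesis by (metis count_list_append le_add1)
qed

lemma cnt_le: "count_list (take a w) c \<le> count_list w c"
  by (metis append_take_drop_id count_list_append le_add1)

lemma cnt_step: "0 < q \<Longrightarrow> q \<le> length w \<Longrightarrow>
   count_list (take q w) c = count_list (take (q-1) w) c + (if w!(q-1) = c then 1 else 0)"
proof -
  assume "0 < q" "q \<le> length w"
  then have "take q w = take (q-1) w @ [w!(q-1)]"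
    using take_Suc_conv_app_nth[of "q-1" w] by simp
  then show ?thesis by simp
qed

lemma cells_card: "k \<le> N \<Longrightarrow> card (ytwh_cells k N {1..N}) = k + 2*N"
proof -
  assume "k \<le> N"
  have e: "ytwh_cells k N {1..N} = (Pair 1 ` {1..k}) \<union> (Pair 2 ` {1..N}) \<union> (Pair 3 ` {1..N})"
    by (auto simp: ytwh_cells_def)
  have "card (Pair (1::nat) ` {1..k}) = k" by (subst card_image) (auto simp: inj_on_def)
  moreover have "card (Pair (2::nat) ` {1..N}) = N" by (subst card_image) (auto simp: inj_on_def)
  moreover have "card (Pair (3::nat) ` {1..N}) = N" by (subst card_image) (auto simp: inj_on_def)
  ultimately show ?thesis unfolding e
    by (subst card_Un_disjoint, auto)+
qed

lemma cells_col:
  assumes "i \<in> {1..N}" "k \<le> N"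
  shows "card {y \<in> ytwh_cells k N {1..N}. snd y = i \<and> P y}
     = of_bool (P (3,i)) + of_bool (P (2,i)) + of_bool (i \<le> k \<and> P (1,i))"
proof -
  have "{y \<in> ytwh_cells k N {1..N}. snd y = i \<and> P y} =
     (if P (3,i) then {(3,i)} else {}) \<union> (if P (2,i) then {(2,i)} else {})
      \<union> (if i \<le> k \<and> P (1,i) then {(1,i)} else {})"
    using assms by (auto simp: ytwh_cells_def split: if_splits)
  then show ?thesis by (simp split: if_splits)
qed


definition phi :: "nat list \<Rightarrow> nat \<Rightarrow> nat \<times> nat" where
  "phi w p = (4 - count_list (take p w) (w!(p-1)), w!(p-1))"

definition Gf :: "nat \<Rightarrow> nat \<Rightarrow> nat list \<Rightarrow> nat \<times> nat \<Rightarrow> nat" where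
  "Gf k N w x = (if x \<in> ytwh_cells k N {1..N} then the_inv_into {1..length w} (phi w) x else 0)"

lemma pb_count:
  assumes "w \<in> pb_words N k" "c \<in> set w"
  shows "c \<in> {1..N}" "count_list w c = (if c \<le> k then 3 else 2)"
proof -
  show c: "c \<in> {1..N}" using assms unfolding pb_words_def by auto
  show "count_list w c = (if c \<le> k then 3 else 2)"
    using assms c unfolding pb_words_def by auto
qed

lemma pb_length:
  assumes "w \<in> pb_words N k" "k \<le> N"
  shows "length w = k + 2*N"
proof -
  have s: "set w \<subseteq> {1..N}" using assms unfolding pb_words_def by auto
  have "length w = sum (count_list w) {1..N}" using sum_count_set[OF s] by simp
  also have "{1..N} = {1..k} \<union> {k<..N}" using assms(2) by auto
  also have "sum (count_list w) ({1..k} \<union> {k<..N}) = sum (count_list w) {1..k} + sum (count_list w) {k<..N}"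
    by (rule sum.union_disjoint) auto
  also have "sum (count_list w) {1..k} = sum (\<lambda>_. 3) {1..k}"
    using assms(1) unfolding pb_words_def by (intro sum.cong) auto
  also have "sum (count_list w) {k<..N} = sum (\<lambda>_. 2) {k<..N}"
    using assms(1) unfolding pb_words_def by (intro sum.cong) auto
  finally show ?thesis using assms(2) by simp
qed

lemma cnt_range:
  assumes "w \<in> pb_words N k" "p \<in> {1..length w}"
  shows "1 \<le> count_list (take p w) (w!(p-1))" "count_list (take p w) (w!(p-1)) \<le> count_list w (w!(p-1))"
    "w!(p-1) \<in> {1..N}" "count_list w (w!(p-1)) = (if w!(p-1) \<le> k then 3 else 2)"
proof -
  show "1 \<le> count_list (take p w) (w!(p-1))" using cnt_step[of p w "w!(p-1)"] assms(2) by simp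
  show "count_list (take p w) (w!(p-1)) \<le> count_list w (w!(p-1))" by (rule cnt_le)
  have "w!(p-1) \<in> set w" using assms(2) by auto
  then show "w!(p-1) \<in> {1..N}" "count_list w (w!(p-1)) = (if w!(p-1) \<le> k then 3 else 2)"
    using pb_count[OF assms(1)] by auto
qed

lemma phi_bij:
  assumes "w \<in> pb_words N k" "k \<le> N"
  shows "bij_betw (phi w) {1..length w} (ytwh_cells k N {1..N})"
proof -
  have inj: "inj_on (phi w) {1..length w}"
  proof (rule inj_onI)
    fix p p' assume p: "p \<in> {1..length w}" and p': "p' \<in> {1..length w}" and e: "phi w p = phi w p'"
    show "p = p'"
    proof (rule ccontr)
      assume "p \<noteq> p'"
      then consider "p < p'" | "p' < p" by linarith
      then show False
      proof cases
        case 1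
        have c: "w!(p-1) = w!(p'-1)" using e by (simp add: phi_def)
        have "count_list (take p' w) (w!(p'-1)) = count_list (take (p'-1) w) (w!(p'-1)) + 1"
          using cnt_step[of p' w] p' by simp
        moreover have "count_list (take p w) (w!(p'-1)) \<le> count_list (take (p'-1) w) (w!(p'-1))"
          using cnt_mono 1 by (intro cnt_mono) simp
        moreover have "count_list (take p' w) (w!(p'-1)) \<le> 3"
          using cnt_range[OF assms(1) p'] by (auto split: if_splits)
        moreover have "4 - count_list (take p w) (w!(p-1)) = 4 - count_list (take p' w) (w!(p'-1))"
          using arg_cong[OF e, of fst] by (simp only: phi_def fst_conv)
        ultimately show False unfolding c by linarith
      next
        case 2
        have c: "w!(p-1) = w!(p'-1)" using e by (simp add: phi_def)
        have "count_list (take p w) (w!(p-1)) = count_list (take (p-1) w) (w!(p-1)) + 1"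
          using cnt_step[of p w] p by simp
        moreover have "count_list (take p' w) (w!(p-1)) \<le> count_list (take (p-1) w) (w!(p-1))"
          by (intro cnt_mono) (use 2 in simp)
        moreover have "count_list (take p w) (w!(p-1)) \<le> 3"
          using cnt_range[OF assms(1) p] by (auto split: if_splits)
        moreover have "4 - count_list (take p w) (w!(p-1)) = 4 - count_list (take p' w) (w!(p'-1))"
          using arg_cong[OF e, of fst] by (simp only: phi_def fst_conv)
        ultimately show False unfolding c by linarith
      qed
    qed
  qed
  have sub: "phi w ` {1..length w} \<subseteq> ytwh_cells k N {1..N}"
  proof
    fix x assume "x \<in> phi w ` {1..length w}"
    then obtain p where p: "p \<in> {1..length w}" and x: "x = phi w p" by auto
    note r = cnt_range[OF assms(1) p]
    show "x \<in> ytwh_cells k N {1..N}"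
    proof (cases "count_list (take p w) (w!(p-1)) = 3")
      case True
      then have "w!(p-1) \<le> k" using r by (auto split: if_splits)
      then show ?thesis using True r x by (auto simp: phi_def ytwh_cells_def)
    next
      case False
      then have "count_list (take p w) (w!(p-1)) = 1 \<or> count_list (take p w) (w!(p-1)) = 2"
        using r by (auto split: if_splits)
      then show ?thesis using r x by (auto simp: phi_def ytwh_cells_def)
    qed
  qed
  have "card (phi w ` {1..length w}) = card (ytwh_cells k N {1..N})"
    using card_image[OF inj] pb_length[OF assms] cells_card[OF assms(2)] by simp
  then have "phi w ` {1..length w} = ytwh_cells k N {1..N}"
    using sub by (intro card_subset_eq) (auto simp: ytwh_cells_def)
  then show ?thesis using inj by (simp add: bij_betw_def)
qed


lemma Gf_props:
  assumes "w \<in> pb_words N k" "k \<le> N" "(r,c) \<in> ytwh_cells k N {1..N}"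
  shows "Gf k N w (r,c) \<in> {1..length w}" "w!(Gf k N w (r,c) - 1) = c"
    "count_list (take (Gf k N w (r,c)) w) c = 4 - r"
proof -
  note b = phi_bij[OF assms(1,2)]
  have g: "Gf k N w (r,c) = the_inv_into {1..length w} (phi w) (r,c)"
    using assms(3) by (simp add: Gf_def)
  show q: "Gf k N w (r,c) \<in> {1..length w}" unfolding g
    using b assms(3) by (meson bij_betw_apply bij_betw_the_inv_into)
  have "phi w (Gf k N w (r,c)) = (r,c)" unfolding g
    using b assms(3) by (simp add: bij_betw_def f_the_inv_into_f)
  then have e: "w!(Gf k N w (r,c) - 1) = c" "4 - count_list (take (Gf k N w (r,c)) w) c = r"
    by (auto simp: phi_def)
  show "w!(Gf k N w (r,c) - 1) = c" by (fact e(1))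
  note cr = cnt_range[OF assms(1) q]
  have "count_list (take (Gf k N w (r,c)) w) c \<le> 3" using cr e(1) by (auto split: if_splits)
  then show "count_list (take (Gf k N w (r,c)) w) c = 4 - r" using e(2) by linarith
qed

lemma Gf_eq:
  assumes "w \<in> pb_words N k" "k \<le> N" "(r,c) \<in> ytwh_cells k N {1..N}" "q \<in> {1..length w}"
    "w!(q-1) = c" "count_list (take q w) c = 4 - r"
  shows "Gf k N w (r,c) = q"
proof -
  note b = phi_bij[OF assms(1,2)]
  have r: "r \<in> {1,2,3}" using assms(3) by (auto simp: ytwh_cells_def)
  have "phi w q = (r,c)" using assms(5,6) r by (auto simp: phi_def)
  then have "the_inv_into {1..length w} (phi w) (r,c) = q"
    using b assms(4) by (intro the_inv_into_f_eq) (auto simp: bij_betw_def)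
  then show ?thesis using assms(3) by (simp add: Gf_def)
qed

lemma Gf_before:
  assumes "w \<in> pb_words N k" "k \<le> N" "(r,c) \<in> ytwh_cells k N {1..N}"
    "count_list (take m w) c \<ge> 4 - r"
  shows "Gf k N w (r,c) \<le> m"
proof (rule ccontr)
  assume "\<not> ?thesis"
  then have "m \<le> Gf k N w (r,c) - 1" by simp
  then have "count_list (take m w) c \<le> count_list (take (Gf k N w (r,c) - 1) w) c" by (rule cnt_mono)
  moreover have "count_list (take (Gf k N w (r,c)) w) c = count_list (take (Gf k N w (r,c) - 1) w) c + 1"
    using cnt_step[of "Gf k N w (r,c)" w c] Gf_props[OF assms(1-3)] by simp
  ultimately show False using Gf_props[OF assms(1-3)] assms(4) by linarith
qed

lemma Gf_after:
  assumes "w \<in> pb_words N k" "k \<le> N" "(r,c) \<in> ytwh_cells k N {1..N}"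
    "count_list (take m w) c < 4 - r"
  shows "m < Gf k N w (r,c)"
proof (rule ccontr)
  assume "\<not> ?thesis"
  then have "count_list (take (Gf k N w (r,c)) w) c \<le> count_list (take m w) c" by (intro cnt_mono) simp
  then show False using Gf_props[OF assms(1-3)] assms(4) by linarith
qed

lemma Gf_col:
  assumes "w \<in> pb_words N k" "k \<le> N" "(r,c) \<in> ytwh_cells k N {1..N}" "(r',c) \<in> ytwh_cells k N {1..N}"
    "r' < r"
  shows "Gf k N w (r,c) < Gf k N w (r',c)"
proof -
  have "count_list (take (Gf k N w (r,c)) w) c < 4 - r'" using Gf_props[OF assms(1-3)] assms(4,5)
    by (auto simp: ytwh_cells_def)
  then show ?thesis by (rule Gf_after[OF assms(1,2,4)])
qed

lemma Gf_row:
  assumes "w \<in> pb_words N k" "k \<le> N" "(r,i) \<in> ytwh_cells k N {1..N}" "(r,j) \<in> ytwh_cells k N {1..N}"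
    "r \<le> 2" "i < j"
  shows "Gf k N w (r,i) < Gf k N w (r,j)"
proof -
  define p where "p = Gf k N w (r,j)"
  have p: "p \<in> {1..length w}" "count_list (take p w) j = 4 - r" using Gf_props[OF assms(1,2,4)] p_def by auto
  have i: "i \<in> {1..N}" "j \<in> {1..N}" using assms(2,3,4) by (auto simp: ytwh_cells_def)
  have pre: "\<And>m. m \<le> length w \<Longrightarrow> count_list (take m w) i = 0 \<or> count_list (take m w) j \<le> count_list (take m w) i"
    using assms(1) i assms(6) unfolding pb_words_def by blast
  have c3: "(3,i) \<in> ytwh_cells k N {1..N}" using i by (auto simp: ytwh_cells_def)
  show ?thesis
  proof (cases "count_list (take p w) i = 0")
    case True
    define q where "q = Gf k N w (3,i)"
    have q: "q \<in> {1..length w}" "count_list (take q w) i = 1" using Gf_props[OF assms(1,2) c3] q_def by auto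
    have "p < q" unfolding q_def by (rule Gf_after[OF assms(1,2) c3]) (use True in simp)
    then have "count_list (take p w) j \<le> count_list (take q w) j" by (intro cnt_mono) simp
    then show ?thesis using pre[of q] q p assms(5) by auto
  next
    case False
    then have "count_list (take p w) i \<ge> 4 - r" using pre[of p] p by auto
    then have "Gf k N w (r,i) \<le> p" by (rule Gf_before[OF assms(1,2,3)])
    moreover have "Gf k N w (r,i) \<noteq> p"
    proof
      assume "Gf k N w (r,i) = p"
      then have "w!(p-1) = i" using Gf_props[OF assms(1,2,3)] by simp
      moreover have "w!(p-1) = j" using Gf_props[OF assms(1,2,4)] p_def by simp
      ultimately show False using assms(6) by simp
    qed
    ultimately show ?thesis unfolding p_def by simp
  qed
qed


lemma G_in:
  assumes "w \<in> pb_words N k" "k \<le> N"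
  shows "({1..N}, Gf k N w) \<in> ytwh k 0 N"
proof -
  let ?C = "ytwh_cells k N {1..N}"
  have b: "bij_betw (Gf k N w) ?C {1..k + 2*N}"
  proof -
    have "bij_betw (the_inv_into {1..length w} (phi w)) ?C {1..length w}"
      by (rule bij_betw_the_inv_into[OF phi_bij[OF assms]])
    then have "bij_betw (Gf k N w) ?C {1..length w}"
      by (rule bij_betw_cong[THEN iffD1, rotated]) (simp add: Gf_def)
    then show ?thesis using pb_length[OF assms] by simp
  qed
  have z: "\<forall>x. x \<notin> ?C \<longrightarrow> Gf k N w x = 0" by (simp add: Gf_def)
  have r1: "\<forall>c. 1 \<le> c \<and> c < k \<longrightarrow> Gf k N w (1, c) < Gf k N w (1, Suc c)"
    using assms by (auto intro!: Gf_row simp: ytwh_cells_def)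
  have r2: "\<forall>c. 1 \<le> c \<and> c < N \<longrightarrow> Gf k N w (2, c) < Gf k N w (2, Suc c)"
    using assms by (auto intro!: Gf_row simp: ytwh_cells_def)
  have c1: "\<forall>c\<in>{1..k}. c \<le> N \<longrightarrow> Gf k N w (2, c) < Gf k N w (1, c)"
    using assms by (auto intro!: Gf_col simp: ytwh_cells_def)
  have c2: "\<forall>c\<in>{1..N}. Gf k N w (3, c) < Gf k N w (2, c)"
    using assms by (auto intro!: Gf_col simp: ytwh_cells_def)
  show ?thesis unfolding ytwh_def using b z r1 r2 c1 c2 by (simp add: Let_def)
qed

lemma G_inj:
  assumes "k \<le> N"
  shows "inj_on (\<lambda>w. ({1..N}, Gf k N w)) (pb_words N k)"
proof (rule inj_onI)
  fix w w' assume w: "w \<in> pb_words N k" and w': "w' \<in> pb_words N k"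
    and e: "({1..N}, Gf k N w) = ({1..N}, Gf k N w')"
  have G: "Gf k N w = Gf k N w'" using e by simp
  have L: "length w = length w'" using pb_length[OF w assms] pb_length[OF w' assms] by simp
  show "w = w'"
  proof (rule nth_equalityI[OF L])
    fix i assume i: "i < length w"
    define p where "p = Suc i"
    have p: "p \<in> {1..length w}" using i p_def by simp
    have x: "phi w p \<in> ytwh_cells k N {1..N}" using phi_bij[OF w assms] p by (auto simp: bij_betw_def)
    obtain r c where rc: "phi w p = (r,c)" by fastforce
    have "Gf k N w (phi w p) = p" using x phi_bij[OF w assms] p by (simp add: Gf_def bij_betw_def the_inv_into_f_f)
    then have "Gf k N w (r,c) = p" using rc by simp
    then have "Gf k N w' (r,c) = p" using G by simp
    then have "w'!(p-1) = c" using Gf_props(2)[OF w' assms, of r c] x rc by simp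
    moreover have "w!(p-1) = c" using rc by (simp add: phi_def)
    ultimately show "w!i = w'!i" using p_def by simp
  qed
qed


lemma chain_lt:
  assumes "\<forall>c. 1 \<le> c \<and> c < N \<longrightarrow> (a::nat \<Rightarrow> nat) c < a (Suc c)" "1 \<le> i" "i < j" "j \<le> N"
  shows "a i < a j"
  using assms(3,4)
proof (induction j)
  case 0 then show ?case by simp
next
  case (Suc j)
  show ?case
  proof (cases "i = j")
    case True then show ?thesis using assms(1,2) Suc.prems by auto
  next
    case False
    then have "a i < a j" using Suc by simp
    moreover have "a j < a (Suc j)" using assms(1,2) Suc.prems False by auto
    ultimately show ?thesis by simp
  qed
qed

lemma H_count:
  assumes "bij_betw f C {1..L}"
  shows "count_list (take m (map (\<lambda>p. snd (the_inv_into C f p)) [1..<L+1])) c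
       = card {y \<in> C. snd y = c \<and> f y \<le> m}"
proof -
  let ?g = "the_inv_into C f"
  let ?w = "map (\<lambda>p. snd (?g p)) [1..<L+1]"
  have inj: "inj_on f C" and im: "f ` C = {1..L}" using assms by (auto simp: bij_betw_def)
  have "count_list (take m ?w) c = card {i. i < length (take m ?w) \<and> c = take m ?w ! i}"
    by (simp add: count_list_eq_length_filter length_filter_conv_card)
  also have "{i. i < length (take m ?w) \<and> c = take m ?w ! i} = {i. i < m \<and> i < L \<and> snd (?g (Suc i)) = c}"
    by (auto simp del: upt_Suc)
  also have "\<dots> = (\<lambda>y. f y - 1) ` {y \<in> C. snd y = c \<and> f y \<le> m}"
  proof
    show "{i. i < m \<and> i < L \<and> snd (?g (Suc i)) = c} \<subseteq> (\<lambda>y. f y - 1) ` {y \<in> C. snd y = c \<and> f y \<le> m}"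
    proof
      fix i assume i: "i \<in> {i. i < m \<and> i < L \<and> snd (?g (Suc i)) = c}"
      then have s: "Suc i \<in> f ` C" using im by auto
      have "?g (Suc i) \<in> C" using s by (simp add: the_inv_into_into[OF inj] im)
      moreover have "f (?g (Suc i)) = Suc i" using s inj by (simp add: f_the_inv_into_f)
      ultimately show "i \<in> (\<lambda>y. f y - 1) ` {y \<in> C. snd y = c \<and> f y \<le> m}"
        using i by (intro image_eqI[of _ _ "?g (Suc i)"]) auto
    qed
  next
    show "(\<lambda>y. f y - 1) ` {y \<in> C. snd y = c \<and> f y \<le> m} \<subseteq> {i. i < m \<and> i < L \<and> snd (?g (Suc i)) = c}"
    proof
      fix i assume "i \<in> (\<lambda>y. f y - 1) ` {y \<in> C. snd y = c \<and> f y \<le> m}"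
      then obtain y where y: "y \<in> C" "snd y = c" "f y \<le> m" "i = f y - 1" by auto
      have fy: "f y \<in> {1..L}" using y(1) im by auto
      then have "Suc i = f y" using y(4) by simp
      then have "?g (Suc i) = y" using y(1) inj by (simp add: the_inv_into_f_f)
      then show "i \<in> {i. i < m \<and> i < L \<and> snd (?g (Suc i)) = c}" using y fy by auto
    qed
  qed
  also have "card \<dots> = card {y \<in> C. snd y = c \<and> f y \<le> m}"
  proof (rule card_image)
    show "inj_on (\<lambda>y. f y - 1) {y \<in> C. snd y = c \<and> f y \<le> m}"
    proof (rule inj_onI)
      fix x y assume x: "x \<in> {y \<in> C. snd y = c \<and> f y \<le> m}" and y: "y \<in> {y \<in> C. snd y = c \<and> f y \<le> m}"
        and e: "f x - 1 = f y - 1"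
      have "f x \<in> {1..L}" "f y \<in> {1..L}" using x y im by auto
      then have "f x = f y" using e by auto
      then show "x = y" using inj x y by (auto dest: inj_onD)
    qed
  qed
  finally show ?thesis .
qed

lemma H_props:
  assumes T: "(S, f) \<in> ytwh k 0 N" and kN: "k \<le> N"
  defines "w \<equiv> map (\<lambda>p. snd (the_inv_into (ytwh_cells k N {1..N}) f p)) [1..<k + 2*N+1]"
  shows "w \<in> pb_words N k \<and> ({1..N}, Gf k N w) = (S, f)"
proof -
  let ?C = "ytwh_cells k N {1..N}"
  let ?L = "k + 2*N"
  have Ssub: "S \<subseteq> {1..N}" and Scard: "card S = N" using T by (auto simp: ytwh_def Let_def)
  have SN: "S = {1..N}" using Ssub Scard by (intro card_subset_eq) auto
  have T': "bij_betw f ?C {1..?L}" "\<forall>x. x \<notin> ?C \<longrightarrow> f x = 0"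
      "\<forall>c. 1 \<le> c \<and> c < k \<longrightarrow> f (1, c) < f (1, Suc c)"
      "\<forall>c. 1 \<le> c \<and> c < N \<longrightarrow> f (2, c) < f (2, Suc c)"
      "\<forall>c\<in>{1..k}. c \<le> N \<longrightarrow> f (2, c) < f (1, c)"
      "\<forall>c\<in>{1..N}. f (3, c) < f (2, c)"
    using T unfolding SN by (auto simp: ytwh_def Let_def)
  have inj: "inj_on f ?C" and im: "f ` ?C = {1..?L}" using T'(1) by (auto simp: bij_betw_def)
  have fle: "x \<in> ?C \<Longrightarrow> f x \<le> ?L \<and> 1 \<le> f x" for x using im by auto
  have cnt: "i \<in> {1..N} \<Longrightarrow> count_list (take m w) i = of_bool (f (3,i) \<le> m) + of_bool (f (2,i) \<le> m)
        + of_bool (i \<le> k \<and> f (1,i) \<le> m)" for i m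
    unfolding w_def H_count[OF T'(1)] by (rule cells_col[OF _ kN])
  have lw: "length w = ?L" by (simp add: w_def del: upt_Suc)
  have setw: "set w \<subseteq> {1..N}"
  proof
    fix c assume "c \<in> set w"
    then obtain p where p: "p \<in> {1..?L}" "c = snd (the_inv_into ?C f p)" by (force simp: w_def less_Suc_eq_le simp del: upt_Suc)
    have "the_inv_into ?C f p \<in> ?C" using p(1) im by (metis the_inv_into_into[OF inj] order_refl)
    then show "c \<in> {1..N}" using p(2) kN by (auto simp: ytwh_cells_def)
  qed
  have cells3: "i \<in> {1..N} \<Longrightarrow> (3,i) \<in> ?C \<and> (2,i) \<in> ?C" for i by (auto simp: ytwh_cells_def)
  have cells1: "i \<in> {1..k} \<Longrightarrow> (1,i) \<in> ?C" for i by (auto simp: ytwh_cells_def)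
  have tot: "i \<in> {1..N} \<Longrightarrow> count_list w i = (if i \<le> k then 3 else 2)" for i
  proof -
    assume i: "i \<in> {1..N}"
    have "count_list w i = count_list (take ?L w) i" using lw by simp
    also have "\<dots> = (if i \<le> k then 3 else 2)" using cnt[OF i, of ?L] fle cells3[OF i] cells1[of i] i by auto
    finally show ?thesis .
  qed
  have pre: "count_list (take m w) i = 0 \<or> count_list (take m w) j \<le> count_list (take m w) i"
    if i: "i \<in> {1..N}" and j: "j \<in> {1..N}" and ij: "i < j" for i j m
  proof -
    have a: "f (2,i) < f (2,j)" using chain_lt[OF T'(4)] i j ij by auto
    have b: "j \<le> k \<Longrightarrow> f (1,i) < f (1,j)" using chain_lt[OF T'(3)] i j ij by auto
    have c: "f (3,i) < f (2,i)" "f (3,j) < f (2,j)" using T'(6) i j by auto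
    have d: "i \<le> k \<Longrightarrow> f (2,i) < f (1,i)" "j \<le> k \<Longrightarrow> f (2,j) < f (1,j)" using T'(5) i j kN by auto
    show ?thesis unfolding cnt[OF i] cnt[OF j] using a b c d ij by (auto simp: of_bool_def split: if_splits)
  qed
  have pb: "w \<in> pb_words N k"
  proof -
    have "\<forall>m\<le>length w. \<forall>i\<in>{1..N}. count_list (take m w) i = 0 \<or>
            (\<forall>j\<in>{1..N}. i < j \<longrightarrow> count_list (take m w) j \<le> count_list (take m w) i)"
      using pre by blast
    then show ?thesis unfolding pb_words_def using setw tot kN by auto
  qed
  have "Gf k N w = f"
  proof
    fix x show "Gf k N w x = f x"
    proof (cases "x \<in> ?C")
      case False then show ?thesis using T'(2) by (simp add: Gf_def del: split_paired_All)
    next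
      case True
      obtain r c where x: "x = (r,c)" by fastforce
      have q: "f x \<in> {1..length w}" using fle[OF True] lw by simp
      have "w!(f x - 1) = snd (the_inv_into ?C f (f x))" 
      proof -
        have lt: "f x - 1 < length [1..<?L+1]" using q lw by (simp del: upt_Suc; linarith)
        have "w!(f x - 1) = snd (the_inv_into ?C f ([1..<?L+1] ! (f x - 1)))"
          unfolding w_def by (rule nth_map[OF lt])
        moreover have "[1..<?L+1] ! (f x - 1) = f x" using lt q lw by (subst nth_upt) (auto simp del: upt_Suc)
        ultimately show ?thesis by simp
      qed
      also have "\<dots> = c" using True inj x by (simp add: the_inv_into_f_f)
      finally have wq: "w!(f x - 1) = c" .
      have ci: "c \<in> {1..N}" using True x kN by (auto simp: ytwh_cells_def)
      have c: "f (3,c) < f (2,c)" using T'(6) ci by auto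
      have d: "c \<le> k \<Longrightarrow> f (2,c) < f (1,c)" using T'(5) ci kN by auto
      have rr: "r = 3 \<or> r = 2 \<or> (r = 1 \<and> c \<le> k)" using True x by (auto simp: ytwh_cells_def)
      have "count_list (take (f x) w) c = 4 - r"
        unfolding cnt[OF ci] using rr c d x by (auto simp: of_bool_def split: if_splits)
      then have "Gf k N w (r,c) = f x" using Gf_eq[OF pb kN, of r c "f x"] True x q wq by simp
      then show ?thesis using x by simp
    qed
  qed
  then show ?thesis using pb SN by simp
qed


lemma G_bij:
  assumes "k \<le> N"
  shows "bij_betw (\<lambda>w. ({1..N}, Gf k N w)) (pb_words N k) (ytwh k 0 N)"
  unfolding bij_betw_def
proof
  show "inj_on (\<lambda>w. ({1..N}, Gf k N w)) (pb_words N k)" by (rule G_inj[OF assms])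
  show "(\<lambda>w. ({1..N}, Gf k N w)) ` pb_words N k = ytwh k 0 N"
  proof
    show "(\<lambda>w. ({1..N}, Gf k N w)) ` pb_words N k \<subseteq> ytwh k 0 N" using G_in[OF _ assms] by auto
  next
    show "ytwh k 0 N \<subseteq> (\<lambda>w. ({1..N}, Gf k N w)) ` pb_words N k"
    proof
      fix T assume T: "T \<in> ytwh k 0 N"
      obtain S f where Sf: "T = (S,f)" by fastforce
      show "T \<in> (\<lambda>w. ({1..N}, Gf k N w)) ` pb_words N k"
        using H_props[OF T[unfolded Sf] assms] Sf by force
    qed
  qed
qed

theorem lemma8:
  fixes n k :: nat
  assumes "n > k"
  shows "(\<exists>g. bij_betw g (pb_words (n - 1) k) (ytwh k 0 (n - 1)))
         \<and> card (pb_words (n - 1) k) = y_count k 0 (n - 1)"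
proof -
  have "k \<le> n - 1" using assms by simp
  note b = G_bij[OF this]
  then show ?thesis unfolding y_count_def using bij_betw_same_card by blast
qed

end
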